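(* A permutation $\sigma$ of $\mathcal M$ preserves the relation $z=\pm x\pm y$ if and only if $\sigma\in GL^\pm(\mathcal M)$.
   Context: $\mathcal M$ denotes the $\mathbb Q$-vector space $\mathbb Q^{<\omega}$ of all sequences of rationals with only finitely many nonzero terms, with zero vector $\vec 0$. The relation $z=\pm x\pm y$ is $\{(x,y,z): z\in\{x+y,x-y,-x+y,-x-y\}\}$; $\sigma$ preserves it if $(a,b,c)$ belongs to it iff $(\sigma a,\sigma b,\sigma c)$ does. $GL(\mathcal M)$ is the group of invertible $\mathbb Q$-linear maps of $\mathcal M$; $S^\pm(\mathcal M)$ is the group of permutations $\sigma$ of $\mathcal M$ with $\sigma(x)\in\{x,-x\}$ for every $x\in\mathcal M$; $GL^\pm(\mathcal M)$ is the group generated by $GL(\mathcal M)\cup S^\pm(\mathcal M)$. *)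

theory Defs
  imports Complex_Main "HOL-Library.Function_Algebras" "HOL-Algebra.Bij" "HOL-Algebra.Generated_Groups"
begin

text \<open>The Q-vector space M = Q^{<omega}: rational sequences with finite support,
  modelled as a carrier set inside the type nat => rat (pointwise operations).\<close>
definition M :: "(nat \<Rightarrow> rat) set" where
  "M = {x. finite {i. x i \<noteq> 0}}"

definition pmrel :: "(nat \<Rightarrow> rat) \<Rightarrow> (nat \<Rightarrow> rat) \<Rightarrow> (nat \<Rightarrow> rat) \<Rightarrow> bool" where
  "pmrel x y z \<longleftrightarrow> z \<in> {x + y, x - y, - x + y, - x - y}"

definition preserves_pm :: "((nat \<Rightarrow> rat) \<Rightarrow> (nat \<Rightarrow> rat)) \<Rightarrow> bool" where
  "preserves_pm \<sigma> \<longleftrightarrow>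
     (\<forall>a\<in>M. \<forall>b\<in>M. \<forall>c\<in>M. pmrel a b c \<longleftrightarrow> pmrel (\<sigma> a) (\<sigma> b) (\<sigma> c))"

text \<open>Permutations of M are the elements of the symmetric group BijGroup M
  (bijections of M, extensional outside M).\<close>

definition GL_M :: "((nat \<Rightarrow> rat) \<Rightarrow> (nat \<Rightarrow> rat)) set" where
  "GL_M = {\<sigma> \<in> Bij M. \<forall>x\<in>M. \<forall>y\<in>M. \<forall>p q :: rat.
              \<sigma> (\<lambda>i. p * x i + q * y i) = (\<lambda>i. p * \<sigma> x i + q * \<sigma> y i)}"

definition Spm_M :: "((nat \<Rightarrow> rat) \<Rightarrow> (nat \<Rightarrow> rat)) set" where
  "Spm_M = {\<sigma> \<in> Bij M. \<forall>x\<in>M. \<sigma> x = x \<or> \<sigma> x = - x}"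

definition GLpm_M :: "((nat \<Rightarrow> rat) \<Rightarrow> (nat \<Rightarrow> rat)) set" where
  "GLpm_M = generate (BijGroup M) (GL_M \<union> Spm_M)"

end

theory Submission
  imports Defs
begin

definition sm :: "rat \<Rightarrow> (nat \<Rightarrow> rat) \<Rightarrow> (nat \<Rightarrow> rat)" where
  "sm q x = (\<lambda>i. q * x i)"

definition sg :: "rat \<Rightarrow> bool" where "sg e \<longleftrightarrow> e = 1 \<or> e = -1"

lemma sm_apply: "sm q x i = q * x i" by (simp add: sm_def)

lemma M_zero[simp]: "0 \<in> M" by (simp add: M_def)
lemma M_add[simp]: "x \<in> M \<Longrightarrow> y \<in> M \<Longrightarrow> x + y \<in> M"
  unfolding M_def by (auto intro: finite_subset[of _ "{i. x i \<noteq> 0} \<union> {i. y i \<noteq> 0}"])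
lemma M_sm[simp]: "x \<in> M \<Longrightarrow> sm q x \<in> M"
  unfolding M_def by (auto simp: sm_apply intro: finite_subset[of _ "{i. x i \<noteq> 0}"])
lemma M_neg[simp]: "x \<in> M \<Longrightarrow> - x \<in> M"
  unfolding M_def by simp
lemma M_diff[simp]: "x \<in> M \<Longrightarrow> y \<in> M \<Longrightarrow> x - y \<in> M"
  using M_add M_neg by (metis diff_conv_add_uminus)

lemma test: "- x = sm (-1) x" "x - y = x + sm (-1) y" by (auto simp: fun_eq_iff sm_apply)
lemma sm1[simp]: "sm 1 x = x" by (auto simp: fun_eq_iff sm_apply)
lemma sm0[simp]: "sm 0 x = 0" "sm q 0 = 0" by (auto simp: fun_eq_iff sm_apply)
lemma sm_sm[simp]: "sm a (sm b x) = sm (a*b) x" by (auto simp: fun_eq_iff sm_apply)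
lemma sm_add_left: "sm a x + sm b x = sm (a+b) x" by (auto simp: fun_eq_iff sm_apply algebra_simps)
lemma sm_neg: "- x = sm (-1) x" by (auto simp: fun_eq_iff sm_apply)
lemma sm_inj: "x \<noteq> 0 \<Longrightarrow> sm a x = sm b x \<Longrightarrow> a = b"
proof -
  assume "x \<noteq> 0" "sm a x = sm b x"
  then obtain i where "x i \<noteq> 0" by (auto simp: fun_eq_iff sm_apply)
  moreover have "a * x i = b * x i" using `sm a x = sm b x` by (metis sm_apply)
  ultimately show "a = b" by simp
qed
lemma sm_eq0: "sm a x = 0 \<Longrightarrow> a = 0 \<or> x = 0"
  by (auto simp: fun_eq_iff sm_apply)
lemma sg_cases: "sg e \<Longrightarrow> (e = 1 \<Longrightarrow> P) \<Longrightarrow> (e = -1 \<Longrightarrow> P) \<Longrightarrow> P" by (auto simp: sg_def)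
lemma sg1[simp]: "sg 1" "sg (-1)" by (auto simp: sg_def)
lemma sg_mult[simp]: "sg a \<Longrightarrow> sg b \<Longrightarrow> sg (a*b)" by (auto simp: sg_def)
lemma sg_sq: "sg a \<Longrightarrow> a * a = 1" by (auto simp: sg_def)
lemma sg_sq2: "sg a \<Longrightarrow> a * (a * z) = z" by (auto simp: sg_def)
lemma sg_nz: "sg a \<Longrightarrow> a \<noteq> 0" by (auto simp: sg_def)
definition indep2 :: "(nat \<Rightarrow> rat) \<Rightarrow> (nat \<Rightarrow> rat) \<Rightarrow> bool" where
  "indep2 x y \<longleftrightarrow> (\<forall>p r. sm p x + sm r y = 0 \<longrightarrow> p = 0 \<and> r = 0)"
definition indep3 :: "(nat \<Rightarrow> rat) \<Rightarrow> (nat \<Rightarrow> rat) \<Rightarrow> (nat \<Rightarrow> rat) \<Rightarrow> bool" where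
  "indep3 x y z \<longleftrightarrow> (\<forall>p r t. sm p x + sm r y + sm t z = 0 \<longrightarrow> p = 0 \<and> r = 0 \<and> t = 0)"

lemma coef2: assumes "indep2 X Y" "sm a X + sm b Y = sm c X + sm d Y" shows "a = c \<and> b = d"
proof -
  have "sm (a-c) X + sm (b-d) Y = 0" using assms(2) by (auto simp: fun_eq_iff sm_apply algebra_simps)
  thus ?thesis using assms(1) unfolding indep2_def by fastforce
qed

lemma coef3: assumes "indep3 X Y Z" "sm a X + sm b Y + sm c Z = sm a' X + sm b' Y + sm c' Z"
  shows "a = a' \<and> b = b' \<and> c = c'"
proof -
  have "sm (a-a') X + sm (b-b') Y + sm (c-c') Z = (sm a X + sm b Y + sm c Z) - (sm a' X + sm b' Y + sm c' Z)"
    by (simp add: fun_eq_iff sm_apply algebra_simps)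
  hence "sm (a-a') X + sm (b-b') Y + sm (c-c') Z = 0" using assms(2) by simp
  thus ?thesis using assms(1) unfolding indep3_def by fastforce
qed

lemma indep2_nz: assumes "indep2 x y" shows "x \<noteq> 0 \<and> y \<noteq> 0"
proof
  show "x \<noteq> 0"
  proof
    assume "x = 0" hence "sm 1 x + sm 0 y = 0" by simp
    thus False using assms unfolding indep2_def by fastforce
  qed
  show "y \<noteq> 0"
  proof
    assume "y = 0" hence "sm 0 x + sm 1 y = 0" by simp
    thus False using assms unfolding indep2_def by fastforce
  qed
qed

lemma indep2_sym: "indep2 x y \<Longrightarrow> indep2 y x"
  unfolding indep2_def by (metis (no_types) add.commute)

lemma arith1: "sg A \<Longrightarrow> sg B \<Longrightarrow> sg C \<Longrightarrow> (p::rat) \<noteq> 0 \<Longrightarrow> p' \<noteq> 0 \<Longrightarrow> p + p' \<noteq> 0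
   \<Longrightarrow> A * p + B * p' = C * (p + p') \<Longrightarrow> A = C \<and> B = C"
  unfolding sg_def by (elim disjE; simp add: algebra_simps)

lemma ind3_lc: assumes "indep3 x y z"
  and "\<And>p r. p*a + r*a' = 0 \<Longrightarrow> p*b + r*b' = 0 \<Longrightarrow> p*c + r*c' = 0 \<Longrightarrow> p = 0 \<and> r = 0"
  shows "indep2 (sm a x + sm b y + sm c z) (sm a' x + sm b' y + sm c' z)"
  unfolding indep2_def
proof (intro allI impI)
  fix p r assume h: "sm p (sm a x + sm b y + sm c z) + sm r (sm a' x + sm b' y + sm c' z) = 0"
  have "sm (p*a + r*a') x + sm (p*b + r*b') y + sm (p*c + r*c') z
      = sm p (sm a x + sm b y + sm c z) + sm r (sm a' x + sm b' y + sm c' z)"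
    by (simp add: fun_eq_iff sm_apply algebra_simps)
  hence "sm (p*a + r*a') x + sm (p*b + r*b') y + sm (p*c + r*c') z = 0" using h by simp
  hence "p*a + r*a' = 0 \<and> p*b + r*b' = 0 \<and> p*c + r*c' = 0" using assms(1) unfolding indep3_def by blast
  thus "p = 0 \<and> r = 0" using assms(2) by blast
qed

lemma ind3_2:
  assumes "indep3 x y z"
  shows "indep2 x y" "indep2 y z" "indep2 x z" "indep2 (x+y) z" "indep2 x (y+z)" "indep2 (x+z) y"
proof -
  have "indep2 (sm 1 x + sm 0 y + sm 0 z) (sm 0 x + sm 1 y + sm 0 z)" by (rule ind3_lc[OF assms]) simp
  thus "indep2 x y" by simp
  have "indep2 (sm 0 x + sm 1 y + sm 0 z) (sm 0 x + sm 0 y + sm 1 z)" by (rule ind3_lc[OF assms]) simp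
  thus "indep2 y z" by simp
  have "indep2 (sm 1 x + sm 0 y + sm 0 z) (sm 0 x + sm 0 y + sm 1 z)" by (rule ind3_lc[OF assms]) simp
  thus "indep2 x z" by simp
  have "indep2 (sm 1 x + sm 1 y + sm 0 z) (sm 0 x + sm 0 y + sm 1 z)" by (rule ind3_lc[OF assms]) simp
  thus "indep2 (x+y) z" by simp
  have "indep2 (sm 1 x + sm 0 y + sm 0 z) (sm 0 x + sm 1 y + sm 1 z)" by (rule ind3_lc[OF assms]) simp
  thus "indep2 x (y+z)" by (simp add: add.assoc)
  have "indep2 (sm 1 x + sm 0 y + sm 1 z) (sm 0 x + sm 1 y + sm 0 z)" by (rule ind3_lc[OF assms]) simp
  thus "indep2 (x+z) y" by simp
qed

definition x0 :: "nat \<Rightarrow> rat" where "x0 = (\<lambda>i. if i = 0 then 1 else 0)"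
definition y1 :: "nat \<Rightarrow> rat" where "y1 = (\<lambda>i. if i = 1 then 1 else 0)"

lemma x0M[simp]: "x0 \<in> M" unfolding M_def x0_def
  by (simp add: finite_subset[of _ "{0}"])
lemma y1M[simp]: "y1 \<in> M" unfolding M_def y1_def
  by (simp add: finite_subset[of _ "{1}"])
lemma x0nz[simp]: "x0 \<noteq> 0" unfolding x0_def by (auto simp: fun_eq_iff)
lemma x0y1: "indep2 x0 y1" unfolding indep2_def
proof (intro allI impI)
  fix p r assume h: "sm p x0 + sm r y1 = 0"
  have "(sm p x0 + sm r y1) 0 = 0" "(sm p x0 + sm r y1) 1 = 0" using h by simp_all
  thus "p = 0 \<and> r = 0" by (simp_all add: sm_apply x0_def y1_def)
qed

lemma not_indep2_x0: "\<not> indep2 x0 (sm q x0)"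
proof
  assume "indep2 x0 (sm q x0)"
  moreover have "sm q x0 + sm (-1) (sm q x0) = 0" by (simp add: fun_eq_iff sm_apply)
  ultimately show False unfolding indep2_def by fastforce
qed

lemma dep2: assumes "\<not> indep2 x u" "x \<noteq> 0" shows "\<exists>q. u = sm q x"
proof -
  obtain p r where h: "sm p x + sm r u = 0" "\<not> (p = 0 \<and> r = 0)" using assms(1) unfolding indep2_def by blast
  have r: "r \<noteq> 0"
  proof
    assume "r = 0" hence "sm p x = 0" using h by simp
    thus False using h assms(2) sm_eq0 \<open>r = 0\<close> by blast
  qed
  have "u = sm (-p/r) x"
  proof (rule ext)
    fix i have "p * x i + r * u i = 0" using h(1) by (metis plus_fun_apply sm_apply zero_fun_apply)
    thus "u i = sm (-p/r) x i" using r by (simp add: sm_apply field_simps)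
  qed
  thus ?thesis by blast
qed

lemma dep3: assumes "\<not> indep3 x u v" "indep2 x u" shows "\<exists>p r. v = sm p x + sm r u"
proof -
  obtain p r t where h: "sm p x + sm r u + sm t v = 0" "\<not> (p = 0 \<and> r = 0 \<and> t = 0)"
    using assms(1) unfolding indep3_def by blast
  have t: "t \<noteq> 0"
  proof
    assume "t = 0" hence "sm p x + sm r u = 0" using h by simp
    thus False using h assms(2) \<open>t = 0\<close> unfolding indep2_def by blast
  qed
  have "v = sm (-p/t) x + sm (-r/t) u"
  proof (rule ext)
    fix i have "p * x i + r * u i + t * v i = 0" using h(1) by (metis plus_fun_apply sm_apply zero_fun_apply)
    hence "t * v i = - (p * x i) - r * u i" by linarith
    thus "v i = (sm (-p/t) x + sm (-r/t) u) i" using t by (simp add: sm_apply field_simps)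
  qed
  thus ?thesis by blast
qed

lemma span_lemma: assumes "\<not> indep3 x0 u v" "u \<in> M" "v \<in> M"
  shows "\<exists>y\<in>M. indep2 x0 y \<and> (\<exists>p1 r1. u = sm p1 x0 + sm r1 y) \<and> (\<exists>p2 r2. v = sm p2 x0 + sm r2 y)"
proof (cases "indep2 x0 u")
  case True
  obtain p r where "v = sm p x0 + sm r u" using dep3[OF assms(1) True] by blast
  moreover have "u = sm 0 x0 + sm 1 u" by simp
  ultimately show ?thesis using True assms(2) by blast
next
  case False
  then obtain q where q: "u = sm q x0" using dep2 x0nz by blast
  show ?thesis
  proof (cases "indep2 x0 v")
    case True
    have "v = sm 0 x0 + sm 1 v" by simp
    moreover have "u = sm q x0 + sm 0 v" using q by simp
    ultimately show ?thesis using True assms(3) by blast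
  next
    case False
    then obtain q' where q': "v = sm q' x0" using dep2 x0nz by blast
    have "v = sm q' x0 + sm 0 y1" "u = sm q x0 + sm 0 y1" using q q' by simp_all
    thus ?thesis using x0y1 y1M by blast
  qed
qed



locale pres =
  fixes g :: "(nat \<Rightarrow> rat) \<Rightarrow> (nat \<Rightarrow> rat)"
  assumes bij: "bij_betw g M M" and pr: "preserves_pm g"
begin

lemma gM[simp]: "x \<in> M \<Longrightarrow> g x \<in> M"
  using bij bij_betw_imp_funcset by blast

lemma ginj: "x \<in> M \<Longrightarrow> y \<in> M \<Longrightarrow> g x = g y \<Longrightarrow> x = y"
  using bij by (meson bij_betw_def inj_onD)

lemma prI: "a \<in> M \<Longrightarrow> b \<in> M \<Longrightarrow> c \<in> M \<Longrightarrow> pmrel a b c \<longleftrightarrow> pmrel (g a) (g b) (g c)"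
  using pr unfolding preserves_pm_def by blast

lemma g0[simp]: "g 0 = 0"
proof -
  have "pmrel 0 0 (0::nat\<Rightarrow>rat)" by (simp add: pmrel_def)
  hence "pmrel (g 0) (g 0) (g 0)" using prI[of 0 0 0] by simp
  hence "\<forall>i. g 0 i = 0" unfolding pmrel_def by (auto simp: fun_eq_iff sm_apply)
  thus ?thesis by (auto simp: fun_eq_iff sm_apply)
qed

lemma gneg: assumes "x \<in> M" shows "g (- x) = - g x"
proof -
  have "pmrel x 0 (-x)" by (simp add: pmrel_def)
  hence "pmrel (g x) 0 (g (-x))" using prI[of x 0 "-x"] assms by simp
  hence "g (-x) = g x \<or> g (-x) = - g x" by (auto simp: pmrel_def)
  thus ?thesis
  proof
    assume "g (-x) = g x"
    hence "-x = x" using ginj assms by simp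
    hence "x = 0" by (auto simp: fun_eq_iff sm_apply)
    thus ?thesis by simp
  qed
qed

lemma gsg: assumes "x \<in> M" "sg e" shows "g (sm e x) = sm e (g x)"
  using assms(2) by (rule sg_cases) (auto simp: gneg[OF assms(1)] sm_neg[symmetric])

lemma gsum: assumes "a \<in> M" "b \<in> M"
  shows "\<exists>e1 e2. sg e1 \<and> sg e2 \<and> g (a + b) = sm e1 (g a) + sm e2 (g b)"
proof -
  have "pmrel a b (a+b)" by (simp add: pmrel_def)
  hence "pmrel (g a) (g b) (g (a+b))" using prI assms by simp
  hence "g (a+b) \<in> {g a + g b, g a - g b, - g a + g b, - g a - g b}" by (simp add: pmrel_def)
  thus ?thesis
  proof (elim insertE)
    assume "g (a+b) = g a + g b" thus ?thesis by (intro exI[of _ 1]) auto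
  next
    assume "g (a+b) = g a - g b" thus ?thesis
      by (intro exI[of _ 1] exI[of _ "-1"]) (simp add: fun_eq_iff sm_apply)
  next
    assume "g (a+b) = - g a + g b" thus ?thesis
      by (intro exI[of _ "-1"] exI[of _ "1"]) (simp add: fun_eq_iff sm_apply)
  next
    assume "g (a+b) = - g a - g b" thus ?thesis
      by (intro exI[of _ "-1"] exI[of _ "-1"]) (simp add: fun_eq_iff sm_apply)
  qed simp
qed

lemma gnat: assumes x: "x \<in> M" shows "\<exists>e. sg e \<and> g (sm (of_nat n) x) = sm (e * of_nat n) (g x)"
proof (induction n rule: less_induct)
  case (less n)
  show ?case
  proof (cases "n \<le> 1")
    case True
    then have "n = 0 \<or> n = 1" by auto
    thus ?thesis by (metis g0 mult_1 of_nat_0 of_nat_1 sg1(1) sm0(1) sm0(2) sm1)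
  next
    case False
    then obtain m where n: "n = Suc m" and m1: "m \<ge> 1" by (cases n) auto
    obtain e where e: "sg e" "g (sm (of_nat m) x) = sm (e * of_nat m) (g x)" using less.IH n by auto
    obtain e' where e': "sg e'" "g (sm (of_nat (m-1)) x) = sm (e' * of_nat (m-1)) (g x)" using less.IH[of "m-1"] n m1 by (meson diff_le_self le_imp_less_Suc)
    have sn: "sm (of_nat n) x = sm (of_nat m) x + x" using n by (auto simp: fun_eq_iff sm_apply algebra_simps)
    obtain e1 e2 where e12: "sg e1" "sg e2" "g (sm (of_nat n) x) = sm e1 (g (sm (of_nat m) x)) + sm e2 (g x)"
      using gsum[of "sm (of_nat m) x" x] x sn by auto
    have gn: "g (sm (of_nat n) x) = sm (e1*e*of_nat m + e2) (g x)"
      using e12(3) e(2) by (auto simp: fun_eq_iff sm_apply algebra_simps)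
    show ?thesis
    proof (cases "e2 = e1 * e")
      case True
      thus ?thesis using gn n e12 by (intro exI[of _ e2]) (auto simp: algebra_simps)
    next
      case False
      hence e2: "e2 = - (e1 * e)" using e12 e by (auto simp: sg_def)
      have m': "(of_nat (m-1) :: rat) = of_nat m - 1" using m1 by (simp add: of_nat_diff)
      have ee: "e' * e' = 1" using sg_sq e' by simp
      have c: "(e1*e*e')*(e'*of_nat(m-1)) = e1*e*of_nat m + e2"
      proof -
        have "(e1*e*e')*(e'*of_nat(m-1)) = (e1*e)*(e'*e')*of_nat(m-1)" by (simp add: ac_simps)
        thus ?thesis using ee m' e2 by (simp add: algebra_simps)
      qed
      have "g (sm (of_nat n) x) = sm (e1*e*e') (sm (e'*of_nat (m-1)) (g x))"
        unfolding sm_sm c using gn by simp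
      also have "\<dots> = sm (e1*e*e') (g (sm (of_nat (m-1)) x))" by (simp only: e'(2))
      also have "\<dots> = g (sm (e1*e*e') (sm (of_nat (m-1)) x))"
        using e e' e12 by (intro gsg[OF M_sm[OF x], symmetric]) simp
      finally have "sm (of_nat n) x = sm (e1*e*e') (sm (of_nat (m-1)) x)"
        using ginj x by simp
      hence "x = 0 \<or> (of_nat n::rat) = e1*e*e' * of_nat (m-1)"
        using sm_inj by fastforce
      moreover have "(of_nat n::rat) \<noteq> e1*e*e' * of_nat (m-1)"
      proof -
        have "sg (e1*e*e')" using e e' e12 by simp
        thus ?thesis using m' n m1 by (auto simp: sg_def)
      qed
      ultimately have "x = 0" by simp
      thus ?thesis by (metis g0 mult_1 sg1(1) sm0(2))
    qed
  qed
qed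

lemma gint: assumes x: "x \<in> M" shows "\<exists>e. sg e \<and> g (sm (of_int k) x) = sm (e * of_int k) (g x)"
proof (cases "k \<ge> 0")
  case True
  then obtain n where "k = int n" using nonneg_int_cases by blast
  thus ?thesis using gnat[OF x, of n] by simp
next
  case False
  then obtain n where k: "k = - int n" by (metis minus_minus nonneg_int_cases neg_0_le_iff_le le_cases)
  obtain e where e: "sg e" "g (sm (of_nat n) x) = sm (e * of_nat n) (g x)" using gnat[OF x, of n] by blast
  have "g (sm (of_int k) x) = g (sm (-1) (sm (of_nat n) x))" using k by simp
  also have "\<dots> = sm (-1) (g (sm (of_nat n) x))" using x by (intro gsg) auto
  also have "\<dots> = sm (e * of_int k) (g x)" using e k by simp
  finally show ?thesis using e by blast
qed

lemma grat: assumes x: "x \<in> M" shows "\<exists>e. sg e \<and> g (sm q x) = sm (e * q) (g x)"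
proof -
  obtain a b where q: "q = of_int a / of_int b" and b: "b > 0"
    by (metis Fract_of_int_quotient quotient_of_unique prod.collapse quotient_of_denom_pos quotient_of_div)
  define y where "y = sm (1 / of_int b) x"
  have y: "y \<in> M" using x y_def by simp
  have xy: "x = sm (of_int b) y" using b y_def by simp
  obtain e1 where e1: "sg e1" "g x = sm (e1 * of_int b) (g y)" using gint[OF y, of b] xy by auto
  have gy: "g y = sm (e1 / of_int b) (g x)" using e1 b sg_sq[OF e1(1)] by (simp add: field_simps)
  obtain e2 where e2: "sg e2" "g (sm (of_int a) y) = sm (e2 * of_int a) (g y)" using gint[OF y, of a] by auto
  have "sm q x = sm (of_int a) y" using q y_def by (simp add: field_simps)
  hence "g (sm q x) = sm (e1*e2 * q) (g x)" using e2 gy q by (simp add: field_simps)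
  thus ?thesis using e1 e2 by (intro exI[of _ "e1*e2"]) simp
qed

lemma gz: "x \<in> M \<Longrightarrow> g x = 0 \<Longrightarrow> x = 0"
  using ginj[of x 0] by simp

lemma gind2: assumes x: "x \<in> M" and y: "y \<in> M" and ind: "indep2 x y" shows "indep2 (g x) (g y)"
  unfolding indep2_def
proof (intro allI impI)
  fix p r assume h: "sm p (g x) + sm r (g y) = 0"
  show "p = 0 \<and> r = 0"
  proof (cases "r = 0")
    case True
    hence "sm p (g x) = 0" using h by simp
    hence "p = 0 \<or> g x = 0" by (rule sm_eq0)
    moreover have "g x \<noteq> 0" using gz x indep2_nz[OF ind] by blast
    ultimately show ?thesis using True by simp
  next
    case False
    obtain e where e: "sg e" "g (sm (-p/r) x) = sm (e * (-p/r)) (g x)" using grat[OF x] by blast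
    have eq: "\<forall>i. p * g x i + r * g y i = 0" using h by (simp add: fun_eq_iff sm_apply)
    have "g y = sm (-p/r) (g x)"
    proof (rule ext)
      fix i
      have "r * g y i = - (p * g x i)" using eq by (metis add_eq_0_iff add.commute)
      thus "g y i = sm (-p/r) (g x) i" using False by (simp add: sm_apply field_simps)
    qed
    also have "\<dots> = sm e (g (sm (-p/r) x))" using e sg_sq[OF e(1)] by (simp add: mult.assoc[symmetric])
    also have "\<dots> = g (sm e (sm (-p/r) x))" by (rule gsg[OF M_sm[OF x] e(1), symmetric])
    finally have "y = sm (e * (-p/r)) x" using ginj y x by simp
    hence "sm (e * (-p/r)) x + sm (-1) y = 0" by (auto simp: fun_eq_iff sm_apply)
    hence False using ind unfolding indep2_def by fastforce
    thus ?thesis ..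
  qed
qed

definition P :: "(nat \<Rightarrow> rat) \<Rightarrow> (nat \<Rightarrow> rat) \<Rightarrow> rat \<Rightarrow> rat \<Rightarrow> rat \<Rightarrow> bool" where
  "P x y p r s \<longleftrightarrow> (\<exists>e. sg e \<and> g (sm p x + sm r y) = sm (e*p) (g x) + sm (e*s*r) (g y))"

lemma PE: assumes x: "x \<in> M" and y: "y \<in> M" shows "\<exists>s. sg s \<and> P x y p r s"
proof -
  obtain e1 e2 where e12: "sg e1" "sg e2" "g (sm p x + sm r y) = sm e1 (g (sm p x)) + sm e2 (g (sm r y))"
    using gsum[of "sm p x" "sm r y"] x y by auto
  obtain a where a: "sg a" "g (sm p x) = sm (a*p) (g x)" using grat[OF x] by blast
  obtain b where b: "sg b" "g (sm r y) = sm (b*r) (g y)" using grat[OF y] by blast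
  have "g (sm p x + sm r y) = sm ((e1*a)*p) (g x) + sm ((e1*a)*(e1*a*e2*b)*r) (g y)"
  proof -
    have "(e1*a)*(e1*a*e2*b) = (e1*e1)*(a*a)*(e2*b)" by (simp add: ac_simps)
    hence k: "(e1*a)*(e1*a*e2*b)*r = e2*b*r" using sg_sq e12 a by simp
    show ?thesis unfolding k using e12(3) a b by (simp add: ac_simps)
  qed
  thus ?thesis unfolding P_def using e12 a b by (intro exI[of _ "e1*a*e2*b"] conjI exI[of _ "e1*a"]) auto
qed

lemma Psame: assumes x: "x \<in> M" and y: "y \<in> M" and ind: "indep2 x y"
  and nz: "p \<noteq> 0" "r \<noteq> 0" "p' \<noteq> 0" "r' \<noteq> 0" "p + p' \<noteq> 0" "r + r' \<noteq> 0"
  and s: "sg s" "P x y p r s" and s': "sg s'" "P x y p' r' s'"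
  shows "s = s'"
proof -
  obtain e where e: "sg e" "g (sm p x + sm r y) = sm (e*p) (g x) + sm (e*s*r) (g y)" using s P_def by blast
  obtain e' where e': "sg e'" "g (sm p' x + sm r' y) = sm (e'*p') (g x) + sm (e'*s'*r') (g y)" using s' P_def by blast
  obtain s'' where s'': "sg s''" "P x y (p+p') (r+r') s''" using PE x y by blast
  obtain e'' where e'': "sg e''" "g (sm (p+p') x + sm (r+r') y) = sm (e''*(p+p')) (g x) + sm (e''*s''*(r+r')) (g y)"
    using s'' P_def by blast
  have sum: "sm (p+p') x + sm (r+r') y = (sm p x + sm r y) + (sm p' x + sm r' y)"
    by (simp add: fun_eq_iff sm_apply algebra_simps)
  obtain e1 e2 where e12: "sg e1" "sg e2" "g (sm (p+p') x + sm (r+r') y) = sm e1 (g (sm p x + sm r y)) + sm e2 (g (sm p' x + sm r' y))"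
    using gsum[of "sm p x + sm r y" "sm p' x + sm r' y"] x y sum by auto
  have "sm (e''*(p+p')) (g x) + sm (e''*s''*(r+r')) (g y)
     = sm ((e1*e)*p + (e2*e')*p') (g x) + sm ((e1*e)*s*r + (e2*e')*s'*r') (g y)"
    using e12(3) e e' e'' by (simp add: fun_eq_iff sm_apply algebra_simps)
  hence c: "e''*(p+p') = (e1*e)*p + (e2*e')*p'" "e''*s''*(r+r') = (e1*e)*s*r + (e2*e')*s'*r'"
    using coef2[OF gind2[OF x y ind]] by blast+
  have A: "e1*e = e''" "e2*e' = e''" using arith1[of "e1*e" "e2*e'" e'' p p'] c(1) e e' e'' e12 nz by auto
  hence "e''*(s*r + s'*r') = e''*(s''*(r+r'))" using c(2) by (simp add: algebra_simps)
  hence "s*r + s'*r' = s''*(r+r')" using sg_nz[OF e''(1)] by simp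
  thus ?thesis using arith1[of s s' s'' r r'] s s' s'' nz by auto
qed

lemma P2D: assumes x: "x \<in> M" and y: "y \<in> M" and ind: "indep2 x y"
  shows "\<exists>s. sg s \<and> (\<forall>p r. P x y p r s)"
proof -
  obtain s0 where s0: "sg s0" "P x y 1 1 s0" using PE x y by blast
  have "P x y p r s0" for p r
  proof (cases "p = 0")
    case True
    obtain b where b: "sg b" "g (sm r y) = sm (b*r) (g y)" using grat[OF y] by blast
    have ss: "s0*s0 = 1" using sg_sq s0 by simp
    have "(b*s0)*s0*r = b*(s0*s0)*r" by (simp add: ac_simps)
    hence eq: "(b*s0)*s0*r = b*r" using ss by simp
    show ?thesis unfolding P_def using True b s0 by (intro exI[of _ "b*s0"]) (simp add: eq)
  next
    case p: False
    show ?thesis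
    proof (cases "r = 0")
      case True
      obtain a where a: "sg a" "g (sm p x) = sm (a*p) (g x)" using grat[OF x] by blast
      thus ?thesis unfolding P_def using True by (intro exI[of _ a]) simp
    next
      case r: False
      obtain s where s: "sg s" "P x y p r s" using PE x y by blast
      define p' where "p' = (if p = -1 then 2 else (1::rat))"
      define r' where "r' = (if r = -1 then 2 else (1::rat))"
      obtain s' where s': "sg s'" "P x y p' r' s'" using PE x y by blast
      have "s = s'" by (rule Psame[OF x y ind p r _ _ _ _ s s']) (auto simp: p'_def r'_def)
      moreover have "s' = s0" by (rule Psame[OF x y ind _ _ _ _ _ _ s' s0]) (auto simp: p'_def r'_def)
      ultimately show ?thesis using s by simp
    qed
  qed
  thus ?thesis using s0 by blast
qed

definition S where "S x y = (SOME s. sg s \<and> (\<forall>p r. P x y p r s))"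

lemma Sprop: assumes "x \<in> M" "y \<in> M" "indep2 x y" shows "sg (S x y)" "P x y p r (S x y)"
  using someI_ex[OF P2D[OF assms]] unfolding S_def[symmetric] by auto

lemma S11: assumes "x \<in> M" "y \<in> M" "indep2 x y"
  obtains e where "sg e" "g (x + y) = sm e (g x) + sm (e * S x y) (g y)"
  using Sprop(2)[OF assms, of 1 1] unfolding P_def by auto

lemma Suniq: assumes "x \<in> M" "y \<in> M" "indep2 x y" "sg e" "sg s"
  "g (x + y) = sm e (g x) + sm (e * s) (g y)" shows "s = S x y"
proof -
  obtain e' where e': "sg e'" "g (x + y) = sm e' (g x) + sm (e' * S x y) (g y)" using S11 assms(1-3) by blast
  have "e = e' \<and> e * s = e' * S x y" using coef2[OF gind2[OF assms(1-3)]] e' assms(6) by metis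
  thus ?thesis using sg_nz[OF e'(1)] by (metis mult_cancel_left)
qed

lemma gind3: assumes x: "x \<in> M" and y: "y \<in> M" and z: "z \<in> M" and ind: "indep3 x y z"
  shows "indep3 (g x) (g y) (g z)"
  unfolding indep3_def
proof (intro allI impI)
  fix p r t assume h: "sm p (g x) + sm r (g y) + sm t (g z) = 0"
  have i2: "indep2 x y" using ind3_2[OF ind] by simp
  show "p = 0 \<and> r = 0 \<and> t = 0"
  proof (cases "t = 0")
    case True
    thus ?thesis using h gind2[OF x y i2] unfolding indep2_def by simp
  next
    case False
    define a where "a = -p/t"
    define b where "b = -r/t"
    have hZ: "\<forall>i. p * g x i + r * g y i + t * g z i = 0" using h by (simp add: fun_eq_iff sm_apply)
    have Z: "g z = sm a (g x) + sm b (g y)"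
    proof (rule ext)
      fix i
      have "t * g z i = - (p * g x i) - r * g y i" using hZ by (metis add_eq_0_iff add.commute diff_conv_add_uminus minus_add_distrib)
      thus "g z i = (sm a (g x) + sm b (g y)) i" using False by (simp add: sm_apply a_def b_def field_simps)
    qed
    define s where "s = S x y"
    have s: "sg s" using Sprop(1)[OF x y i2] s_def by simp
    obtain e where e: "sg e" "g (sm a x + sm (s*b) y) = sm (e*a) (g x) + sm (e*s*(s*b)) (g y)"
      using Sprop(2)[OF x y i2, of a "s*b"] unfolding P_def s_def by blast
    have ss: "s*s = 1" using sg_sq s by simp
    have "e*s*(s*b) = e*(s*s)*b" by (simp add: ac_simps)
    hence k: "e*s*(s*b) = e*b" using ss by simp
    have "g (sm a x + sm (s*b) y) = sm (e*a) (g x) + sm (e*b) (g y)" using e(2) unfolding k .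
    hence gw: "g (sm a x + sm (s*b) y) = sm e (g z)" unfolding Z by (simp add: fun_eq_iff sm_apply algebra_simps)
    have ee: "e*e = 1" using sg_sq e by simp
    have "sm e (g (sm a x + sm (s*b) y)) = sm (e*e) (g z)" by (simp add: gw)
    hence "g z = sm e (g (sm a x + sm (s*b) y))" using ee by simp
    also have "\<dots> = g (sm e (sm a x + sm (s*b) y))" using x y e by (intro gsg[symmetric]) auto
    finally have "z = sm e (sm a x + sm (s*b) y)" using ginj x y z by simp
    hence "sm (e*a) x + sm (e*s*b) y + sm (-1) z = 0" by (simp add: fun_eq_iff sm_apply algebra_simps)
    hence False using ind unfolding indep3_def by fastforce
    thus ?thesis ..
  qed
qed

lemma cocycle: assumes x: "x \<in> M" and y: "y \<in> M" and z: "z \<in> M" and ind: "indep3 x y z"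
  shows "S x z = S x y * S y z"
proof -
  note i = ind3_2[OF ind]
  have I: "indep3 (g x) (g y) (g z)" by (rule gind3[OF x y z ind])
  obtain a where a: "sg a" "g (x + y) = sm a (g x) + sm (a * S x y) (g y)" using S11[OF x y i(1)] by blast
  obtain b where b: "sg b" "g (y + z) = sm b (g y) + sm (b * S y z) (g z)" using S11[OF y z i(2)] by blast
  obtain c where c: "sg c" "g (x + z) = sm c (g x) + sm (c * S x z) (g z)" using S11[OF x z i(3)] by blast
  obtain e1 where e1: "sg e1" "g ((x + y) + z) = sm e1 (g (x+y)) + sm (e1 * S (x+y) z) (g z)"
    using S11[OF _ z i(4)] x y by auto
  obtain e2 where e2: "sg e2" "g (x + (y + z)) = sm e2 (g x) + sm (e2 * S x (y+z)) (g (y+z))"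
    using S11[OF x _ i(5)] y z by auto
  obtain e3 where e3: "sg e3" "g ((x + z) + y) = sm e3 (g (x+z)) + sm (e3 * S (x+z) y) (g y)"
    using S11[OF _ y i(6)] x z by auto
  have w1: "(x + y) + z = x + (y + z)" "(x + z) + y = x + (y + z)" by (simp_all add: ac_simps)
  define S2 where "S2 = S x (y+z)"
  have f1: "g (x + (y + z)) = sm (e1*a) (g x) + sm (e1*a*S x y) (g y) + sm (e1*S (x+y) z) (g z)"
    using e1(2) a(2) w1 by (simp add: fun_eq_iff sm_apply algebra_simps)
  have f2: "g (x + (y + z)) = sm e2 (g x) + sm (e2*S2*b) (g y) + sm (e2*S2*b*S y z) (g z)"
    using e2(2) b(2) S2_def by (simp add: fun_eq_iff sm_apply algebra_simps)
  have f3: "g (x + (y + z)) = sm (e3*c) (g x) + sm (e3*S (x+z) y) (g y) + sm (e3*c*S x z) (g z)"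
    using e3(2) c(2) w1 by (simp add: fun_eq_iff sm_apply algebra_simps)
  have A: "e1*a = e2 \<and> e1*a*S x y = e2*S2*b \<and> e1*S (x+y) z = e2*S2*b*S y z"
    by (rule coef3[OF I]) (use f1 f2 in simp)
  have B: "e2 = e3*c \<and> e2*S2*b = e3*S (x+z) y \<and> e2*S2*b*S y z = e3*c*S x z"
    by (rule coef3[OF I]) (use f2 f3 in simp)
  have e2nz: "e2 \<noteq> 0" using sg_nz e2 by simp
  have "e2 * S x y = e1*a*S x y" by (simp only: conjunct1[OF A])
  also have "\<dots> = e2*S2*b" using conjunct1[OF conjunct2[OF A]] .
  finally have "e2 * S x y = e2 * (S2*b)" by (simp add: ac_simps)
  hence C1: "S x y = S2*b" using e2nz by simp
  have "e2 * (S2*b*S y z) = e2*S2*b*S y z" by (simp add: ac_simps)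
  also have "\<dots> = e3*c*S x z" using conjunct2[OF conjunct2[OF B]] .
  also have "\<dots> = e2 * S x z" by (simp only: conjunct1[OF B])
  finally have C2: "S x z = S2*b*S y z" using e2nz by simp
  show ?thesis using C1 C2 by simp
qed

lemma P3: assumes u: "u \<in> M" and v: "v \<in> M" and ind: "indep2 u v" and a: "sg a"
  and h: "g (u + v) = sm a (g u) + sm (a * S u v) (g v)"
  shows "S u (u + v) = a"
proof -
  have ind': "indep2 u (u + v)"
    unfolding indep2_def
  proof (intro allI impI)
    fix p r assume "sm p u + sm r (u + v) = 0"
    moreover have "sm p u + sm r (u + v) = sm (p + r) u + sm r v" by (simp add: fun_eq_iff sm_apply algebra_simps)
    ultimately have "p + r = 0 \<and> r = 0" using ind unfolding indep2_def by metis
    thus "p = 0 \<and> r = 0" by simp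
  qed
  define S' where "S' = S u (u+v)"
  define s where "s = S u v"
  have s: "sg s" using Sprop(1)[OF u v ind] s_def by simp
  obtain e where e: "sg e" "g (u + (u + v)) = sm e (g u) + sm (e * S') (g (u+v))" using S11[OF u M_add[OF u v] ind'] unfolding S'_def by blast
  obtain f where f: "sg f" "g (sm 2 u + sm 1 v) = sm (f*2) (g u) + sm (f*s*1) (g v)"
    using Sprop(2)[OF u v ind, of 2 1] unfolding P_def s_def by blast
  have uu: "u + (u + v) = sm 2 u + sm 1 v" by (simp add: fun_eq_iff sm_apply)
  have "sm (e + e*S'*a) (g u) + sm (e*S'*a*s) (g v) = sm (f*2) (g u) + sm (f*s*1) (g v)"
    using e(2) f(2) h uu s_def by (simp add: fun_eq_iff sm_apply algebra_simps)
  hence c: "e + e*S'*a = f*2 \<and> e*S'*a*s = f*s*1" by (rule coef2[OF gind2[OF u v ind]])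
  have "(e*S'*a)*s = f*s" using c by simp
  hence c2: "e*S'*a = f" using sg_nz[OF s] by simp
  hence "e = f" using c by simp
  hence "e * (S'*a) = e * 1" using c2 by (simp add: ac_simps)
  hence "S'*a = 1" using sg_nz[OF e(1)] by simp
  hence "S'*a*a = a" by simp
  thus ?thesis using sg_sq[OF a] S'_def by (simp add: mult.assoc)
qed

definition T where "T v = (if indep2 x0 v then sm (S x0 v) (g v) else sm (THE q. v = sm q x0) (g x0))"

lemma Tx0: "T (sm q x0) = sm q (g x0)"
proof -
  have "(THE q'. sm q x0 = sm q' x0) = q"
    by (rule the_equality) (auto dest: sm_inj[OF x0nz])
  thus ?thesis unfolding T_def using not_indep2_x0 by simp
qed

lemma Tplane: assumes y: "y \<in> M" and ind: "indep2 x0 y"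
  shows "T (sm p x0 + sm r y) = sm p (g x0) + sm (r * S x0 y) (g y)"
proof (cases "r = 0")
  case True thus ?thesis using Tx0 by simp
next
  case False
  define v where "v = sm p x0 + sm r y"
  have vM: "v \<in> M" using y v_def by simp
  have indv: "indep2 x0 v" unfolding indep2_def
  proof (intro allI impI)
    fix a b assume "sm a x0 + sm b v = 0"
    moreover have "sm a x0 + sm b v = sm (a + b*p) x0 + sm (b*r) y" by (simp add: v_def fun_eq_iff sm_apply algebra_simps)
    ultimately have "a + b*p = 0 \<and> b*r = 0" using ind unfolding indep2_def by metis
    thus "a = 0 \<and> b = 0" using False by auto
  qed
  define s where "s = S x0 y"
  have s: "sg s" using Sprop(1)[OF x0M y ind] s_def by simp
  obtain e where e: "sg e" "g v = sm (e*p) (g x0) + sm (e*s*r) (g y)"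
    using Sprop(2)[OF x0M y ind, of p r] unfolding P_def s_def v_def by blast
  define S' where "S' = S x0 v"
  obtain e' where e': "sg e'" "g (x0 + v) = sm e' (g x0) + sm (e' * S') (g v)"
    using S11[OF x0M vM indv] unfolding S'_def by blast
  obtain f where f: "sg f" "g (sm (1+p) x0 + sm r y) = sm (f*(1+p)) (g x0) + sm (f*s*r) (g y)"
    using Sprop(2)[OF x0M y ind, of "1+p" r] unfolding P_def s_def by blast
  have xv: "x0 + v = sm (1+p) x0 + sm r y" by (simp add: v_def fun_eq_iff sm_apply algebra_simps)
  have "sm (e' + e'*S'*e*p) (g x0) + sm (e'*S'*e*s*r) (g y) = sm (f*(1+p)) (g x0) + sm (f*s*r) (g y)"
    using e'(2) e(2) f(2) xv by (simp add: fun_eq_iff sm_apply algebra_simps)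
  hence c: "e' + e'*S'*e*p = f*(1+p) \<and> e'*S'*e*s*r = f*s*r" by (rule coef2[OF gind2[OF x0M y ind]])
  have "(e'*S'*e)*(s*r) = f*(s*r)" using c by (simp add: ac_simps)
  hence c2: "e'*S'*e = f" using sg_nz[OF s] False by simp
  hence "e' = f" using c by (simp add: algebra_simps)
  hence "e' * (S'*e) = e' * 1" using c2 by (simp add: ac_simps)
  hence Se: "S'*e = 1" using sg_nz[OF e'(1)] by simp
  have "T v = sm S' (g v)" unfolding T_def S'_def using indv by simp
  also have "\<dots> = sm ((S'*e)*p) (g x0) + sm ((S'*e)*(s*r)) (g y)" using e(2) by (simp add: fun_eq_iff sm_apply algebra_simps)
  also have "\<dots> = sm p (g x0) + sm (r * S x0 y) (g y)" using Se s_def by (simp add: ac_simps)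
  finally show ?thesis unfolding v_def .
qed

lemma Tadd: assumes u: "u \<in> M" and v: "v \<in> M" shows "T (u + v) = T u + T v"
proof (cases "indep3 x0 u v")
  case False
  obtain y p1 r1 p2 r2 where y: "y \<in> M" "indep2 x0 y" "u = sm p1 x0 + sm r1 y" "v = sm p2 x0 + sm r2 y"
    using span_lemma[OF False u v] by blast
  have "u + v = sm (p1+p2) x0 + sm (r1+r2) y" using y by (simp add: fun_eq_iff sm_apply algebra_simps)
  hence "T (u + v) = sm (p1+p2) (g x0) + sm ((r1+r2) * S x0 y) (g y)" using Tplane[OF y(1,2)] by simp
  also have "\<dots> = (sm p1 (g x0) + sm (r1 * S x0 y) (g y)) + (sm p2 (g x0) + sm (r2 * S x0 y) (g y))"
    by (simp add: fun_eq_iff sm_apply algebra_simps)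
  also have "\<dots> = T u + T v" using Tplane[OF y(1,2)] y(3,4) by simp
  finally show ?thesis .
next
  case ind: True
  note i = ind3_2[OF ind]
  have ind': "indep3 x0 u (u + v)" unfolding indep3_def
  proof (intro allI impI)
    fix p r t assume "sm p x0 + sm r u + sm t (u + v) = 0"
    moreover have "sm p x0 + sm r u + sm t (u + v) = sm p x0 + sm (r+t) u + sm t v"
      by (simp add: fun_eq_iff sm_apply algebra_simps)
    ultimately have "p = 0 \<and> r + t = 0 \<and> t = 0" using ind unfolding indep3_def by metis
    thus "p = 0 \<and> r = 0 \<and> t = 0" by simp
  qed
  obtain a where a: "sg a" "g (u + v) = sm a (g u) + sm (a * S u v) (g v)" using S11[OF u v i(2)] by blast
  have c1: "S x0 (u+v) = S x0 u * S u (u+v)" using cocycle[OF x0M u _ ind'] u v by simp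
  have c2: "S u (u+v) = a" using P3[OF u v i(2) a] .
  have c3: "S x0 v = S x0 u * S u v" using cocycle[OF x0M u v ind] .
  have aa: "a * a = 1" using sg_sq[OF a(1)] .
  have "T (u + v) = sm (S x0 (u+v)) (g (u+v))" unfolding T_def using i(5) by simp
  also have "\<dots> = sm (S x0 u * (a * a)) (g u) + sm (S x0 u * (a * a) * S u v) (g v)"
    using c1 c2 a(2) by (simp add: fun_eq_iff sm_apply algebra_simps)
  also have "\<dots> = sm (S x0 u) (g u) + sm (S x0 v) (g v)" using aa c3 by simp
  also have "\<dots> = T u + T v" unfolding T_def using i(1,3) by simp
  finally show ?thesis .
qed

lemma Tsm: assumes u: "u \<in> M" shows "T (sm q u) = sm q (T u)"
proof -
  have "\<not> indep3 x0 u 0"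
  proof
    assume "indep3 x0 u 0"
    moreover have "sm 0 x0 + sm 0 u + sm 1 (0::nat\<Rightarrow>rat) = 0" by simp
    ultimately show False unfolding indep3_def by fastforce
  qed
  then obtain y p1 r1 where y: "y \<in> M" "indep2 x0 y" "u = sm p1 x0 + sm r1 y"
    using span_lemma[OF _ u M_zero] by blast
  have "sm q u = sm (q*p1) x0 + sm (q*r1) y" using y by (simp add: fun_eq_iff sm_apply algebra_simps)
  hence "T (sm q u) = sm (q*p1) (g x0) + sm ((q*r1) * S x0 y) (g y)" using Tplane[OF y(1,2)] by simp
  also have "\<dots> = sm q (sm p1 (g x0) + sm (r1 * S x0 y) (g y))"
    by (simp add: fun_eq_iff sm_apply algebra_simps)
  also have "\<dots> = sm q (T u)" using Tplane[OF y(1,2)] y(3) by simp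
  finally show ?thesis .
qed

lemma Tsign: assumes u: "u \<in> M" shows "\<exists>e. sg e \<and> T u = sm e (g u)"
proof (cases "indep2 x0 u")
  case True thus ?thesis unfolding T_def using Sprop(1)[OF x0M u True] by auto
next
  case False
  then obtain q where q: "u = sm q x0" using dep2 x0nz by blast
  obtain e where e: "sg e" "g (sm q x0) = sm (e*q) (g x0)" using grat[OF x0M] by blast
  have "T u = sm q (g x0)" using q Tx0 by simp
  also have "\<dots> = sm (e*(e*q)) (g x0)" unfolding sg_sq2[OF e(1), of q] ..
  also have "\<dots> = sm e (g u)" using q e by simp
  finally show ?thesis using e by blast
qed

lemma TM: "u \<in> M \<Longrightarrow> T u \<in> M"
  using Tsign by (metis M_sm gM)

lemma Tinj: assumes "u \<in> M" "v \<in> M" "T u = T v" shows "u = v"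
proof -
  have "T (u + sm (-1) v) = T u + sm (-1) (T v)" using Tadd Tsm assms by simp
  hence "T (u + sm (-1) v) = 0" using assms(3) by (simp add: fun_eq_iff sm_apply)
  moreover obtain e where "sg e" "T (u + sm (-1) v) = sm e (g (u + sm (-1) v))"
    using Tsign[OF M_add[OF assms(1) M_sm[OF assms(2)]]] by blast
  ultimately have "g (u + sm (-1) v) = 0" using sm_eq0 sg_nz by metis
  hence "u + sm (-1) v = 0" using gz assms by simp
  thus ?thesis by (simp add: fun_eq_iff sm_apply)
qed

end


context pres begin

lemma Tsurj: assumes z: "z \<in> M" shows "\<exists>u\<in>M. T u = z"
proof -
  have "z \<in> g ` M" using bij z by (simp add: bij_betw_def)
  then obtain w where w: "w \<in> M" "g w = z" by blast
  obtain e where e: "sg e" "T w = sm e z" using Tsign[OF w(1)] w(2) by blast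
  show ?thesis
  proof (cases "e = 1")
    case True thus ?thesis using e w by auto
  next
    case False
    hence "e = -1" using e by (auto simp: sg_def)
    hence "T (sm (-1) w) = z" using Tsm[OF w(1)] e by (simp add: fun_eq_iff sm_apply)
    thus ?thesis using w by (intro bexI[of _ "sm (-1) w"]) auto
  qed
qed

lemma Tr_GL: "restrict T M \<in> GL_M"
proof -
  have bT: "bij_betw T M M"
    unfolding bij_betw_def inj_on_def using Tinj TM Tsurj by blast
  have "bij_betw (restrict T M) M M = bij_betw T M M" by (rule bij_betw_cong) simp
  hence b: "restrict T M \<in> Bij M" unfolding Bij_def using bT by simp
  have lin: "\<forall>x\<in>M. \<forall>y\<in>M. \<forall>p q. restrict T M (\<lambda>i. p * x i + q * y i) = (\<lambda>i. p * restrict T M x i + q * restrict T M y i)"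
  proof (intro ballI allI)
    fix x y p q assume that: "x \<in> M" "y \<in> M"
    have e: "(\<lambda>i. p * x i + q * y i) = sm p x + sm q y" by (simp add: fun_eq_iff sm_apply)
    have "T (sm p x + sm q y) = sm p (T x) + sm q (T y)" using Tadd[of "sm p x" "sm q y"] Tsm that by simp
    moreover have "sm p x + sm q y \<in> M" using that by simp
    ultimately show "restrict T M (\<lambda>i. p * x i + q * y i) = (\<lambda>i. p * restrict T M x i + q * restrict T M y i)"
      unfolding e using that by (simp add: fun_eq_iff sm_apply)
  qed
  show ?thesis unfolding GL_M_def using b lin by blast
qed

definition Sg where "Sg = restrict (\<lambda>x. if g x = T x then x else - x) M"

lemma SgM: "x \<in> M \<Longrightarrow> Sg x \<in> M" unfolding Sg_def by simp

lemma TSg: assumes x: "x \<in> M" shows "T (Sg x) = g x"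
proof (cases "g x = T x")
  case True thus ?thesis unfolding Sg_def using x by simp
next
  case False
  obtain e where e: "sg e" "T x = sm e (g x)" using Tsign[OF x] by blast
  have "e = -1" using e False by (auto simp: sg_def)
  hence "T (sm (-1) x) = g x" using Tsm[OF x] e by (simp add: fun_eq_iff sm_apply)
  thus ?thesis unfolding Sg_def using x False by (simp add: sm_neg)
qed

lemma Sg_Spm: "Sg \<in> Spm_M"
proof -
  have inj: "inj_on Sg M"
    unfolding inj_on_def
  proof (intro ballI impI)
    fix x y assume xy: "x \<in> M" "y \<in> M" "Sg x = Sg y"
    have "g x = T (Sg x)" using TSg[OF xy(1)] by simp
    also have "\<dots> = T (Sg y)" using xy(3) by simp
    also have "\<dots> = g y" using TSg[OF xy(2)] by simp
    finally have "g x = g y" .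
    thus "x = y" using ginj xy by blast
  qed
  have "Sg ` M = M"
  proof
    show "Sg ` M \<subseteq> M" using SgM by auto
    show "M \<subseteq> Sg ` M"
    proof
      fix z assume z: "z \<in> M"
      have gs: "g ` M = M" by (rule bij_betw_imp_surj_on[OF bij])
      have "T z \<in> g ` M" unfolding gs by (rule TM[OF z])
      then obtain w where w: "w \<in> M" "T z = g w" by (rule imageE)
      have "T (Sg w) = T z" using TSg[OF w(1)] w(2) by simp
      hence "Sg w = z" by (rule Tinj[OF SgM[OF w(1)] z])
      thus "z \<in> Sg ` M" using w by blast
    qed
  qed
  hence "bij_betw Sg M M" unfolding bij_betw_def using inj by blast
  moreover have "Sg \<in> extensional M" unfolding Sg_def by (rule restrict_extensional)
  ultimately have "Sg \<in> Bij M" unfolding Bij_def by blast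
  moreover have "\<forall>x\<in>M. Sg x = x \<or> Sg x = - x" unfolding Sg_def by (simp add: restrict_def)
  ultimately show ?thesis unfolding Spm_M_def by blast
qed

lemma main_dir: "restrict g M \<in> GLpm_M"
proof -
  have b1: "restrict T M \<in> Bij M" using Tr_GL unfolding GL_M_def by blast
  have b2: "Sg \<in> Bij M" using Sg_Spm unfolding Spm_M_def by blast
  have "restrict g M = compose M (restrict T M) Sg"
    unfolding compose_def
  proof (rule ext)
    fix x show "restrict g M x = restrict (\<lambda>x. restrict T M (Sg x)) M x"
      using TSg SgM by (cases "x \<in> M") simp_all
  qed
  also have "\<dots> = restrict T M \<otimes>\<^bsub>BijGroup M\<^esub> Sg" using b1 b2 unfolding BijGroup_def by simp
  finally have e: "restrict g M = restrict T M \<otimes>\<^bsub>BijGroup M\<^esub> Sg" .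
  show ?thesis unfolding GLpm_M_def e
    by (rule generate.eng; rule generate.incl) (use Tr_GL Sg_Spm in blast)+
qed

end



lemma pmrel_sm: "pmrel a b c \<longleftrightarrow> (\<exists>e1 e2. sg e1 \<and> sg e2 \<and> c = sm e1 a + sm e2 b)"
proof
  assume "pmrel a b c"
  hence "c = a + b \<or> c = a - b \<or> c = - a + b \<or> c = - a - b" by (simp add: pmrel_def)
  thus "\<exists>e1 e2. sg e1 \<and> sg e2 \<and> c = sm e1 a + sm e2 b"
  proof (elim disjE)
    assume "c = a + b" thus ?thesis by (intro exI[of _ 1]) simp
  next
    assume "c = a - b" thus ?thesis
      by (intro exI[of _ 1] exI[of _ "-1"]) (simp add: fun_eq_iff sm_apply)
  next
    assume "c = - a + b" thus ?thesis
      by (intro exI[of _ "-1"] exI[of _ "1"]) (simp add: fun_eq_iff sm_apply)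
  next
    assume "c = - a - b" thus ?thesis
      by (intro exI[of _ "-1"] exI[of _ "-1"]) (simp add: fun_eq_iff sm_apply)
  qed
next
  assume "\<exists>e1 e2. sg e1 \<and> sg e2 \<and> c = sm e1 a + sm e2 b"
  then obtain e1 e2 where e: "sg e1" "sg e2" "c = sm e1 a + sm e2 b" by blast
  show "pmrel a b c" unfolding pmrel_def
    using e by (elim sg_cases) (simp_all add: fun_eq_iff sm_apply)
qed

lemma pmrel_scale1: assumes "sg ea" "sg eb" "sg ec" "pmrel a b c"
  shows "pmrel (sm ea a) (sm eb b) (sm ec c)"
proof -
  obtain e1 e2 where e: "sg e1" "sg e2" "c = sm e1 a + sm e2 b" using assms(4) pmrel_sm by blast
  have k1: "ec*e1*ea*ea = ec*e1" using sg_sq[OF assms(1)] by (simp add: mult.assoc)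
  have k2: "ec*e2*eb*eb = ec*e2" using sg_sq[OF assms(2)] by (simp add: mult.assoc)
  have "sm ec c = sm (ec*e1) a + sm (ec*e2) b" using e(3) by (simp add: fun_eq_iff sm_apply algebra_simps)
  hence "sm ec c = sm (ec*e1*ea) (sm ea a) + sm (ec*e2*eb) (sm eb b)" unfolding sm_sm mult.assoc[symmetric] k1 k2 .
  thus ?thesis unfolding pmrel_sm using assms e by (metis sg_mult)
qed

lemma pmrel_scale: assumes "sg ea" "sg eb" "sg ec"
  shows "pmrel (sm ea a) (sm eb b) (sm ec c) \<longleftrightarrow> pmrel a b c"
proof
  assume "pmrel (sm ea a) (sm eb b) (sm ec c)"
  from pmrel_scale1[OF assms this] show "pmrel a b c"
    using sg_sq[OF assms(1)] sg_sq[OF assms(2)] sg_sq[OF assms(3)] by simp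
qed (rule pmrel_scale1[OF assms])

lemma pres_GL: assumes h: "h \<in> GL_M" shows "preserves_pm h"
proof -
  have hB: "h \<in> Bij M" using h unfolding GL_M_def by blast
  hence bh: "bij_betw h M M" unfolding Bij_def by blast
  have hM: "x \<in> M \<Longrightarrow> h x \<in> M" for x using bh bij_betw_imp_funcset by blast
  have lin: "h (sm p x + sm q y) = sm p (h x) + sm q (h y)" if "x \<in> M" "y \<in> M" for x y p q
  proof -
    have e1: "(\<lambda>i. p * x i + q * y i) = sm p x + sm q y" and e2: "(\<lambda>i. p * h x i + q * h y i) = sm p (h x) + sm q (h y)"
      by (simp_all add: fun_eq_iff sm_apply)
    have k: "h (\<lambda>i. p * x i + q * y i) = (\<lambda>i. p * h x i + q * h y i)" using h that unfolding GL_M_def by blast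
    show ?thesis using k unfolding e1 e2 .
  qed
  show ?thesis unfolding preserves_pm_def
  proof (intro ballI)
    fix a b c assume abc: "a \<in> M" "b \<in> M" "c \<in> M"
    show "pmrel a b c \<longleftrightarrow> pmrel (h a) (h b) (h c)"
    proof
      assume "pmrel a b c"
      then obtain e1 e2 where e: "sg e1" "sg e2" "c = sm e1 a + sm e2 b" using pmrel_sm by blast
      hence "h c = sm e1 (h a) + sm e2 (h b)" using lin abc by simp
      thus "pmrel (h a) (h b) (h c)" using e pmrel_sm by blast
    next
      assume "pmrel (h a) (h b) (h c)"
      then obtain e1 e2 where e: "sg e1" "sg e2" "h c = sm e1 (h a) + sm e2 (h b)" using pmrel_sm by blast
      hence "h c = h (sm e1 a + sm e2 b)" using lin abc by simp
      hence "c = sm e1 a + sm e2 b" using bh abc unfolding bij_betw_def inj_on_def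
        by (meson M_add M_sm)
      thus "pmrel a b c" using e pmrel_sm by blast
    qed
  qed
qed

lemma pres_Spm: assumes h: "h \<in> Spm_M" shows "preserves_pm h"
  unfolding preserves_pm_def
proof (intro ballI)
  fix a b c assume abc: "a \<in> M" "b \<in> M" "c \<in> M"
  have sg: "\<exists>e. sg e \<and> h x = sm e x" if "x \<in> M" for x
  proof -
    have "h x = x \<or> h x = - x" using h that unfolding Spm_M_def by blast
    thus ?thesis by (metis sg1 sm1 sm_neg)
  qed
  obtain ea eb ec where "sg ea" "h a = sm ea a" "sg eb" "h b = sm eb b" "sg ec" "h c = sm ec c"
    using sg abc by meson
  thus "pmrel a b c \<longleftrightarrow> pmrel (h a) (h b) (h c)" using pmrel_scale by simp
qed

lemma pres_comp: assumes "h1 \<in> Bij M" "h2 \<in> Bij M" "preserves_pm h1" "preserves_pm h2"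
  shows "preserves_pm (compose M h1 h2)"
  unfolding preserves_pm_def
proof (intro ballI)
  fix a b c assume abc: "a \<in> M" "b \<in> M" "c \<in> M"
  have m: "x \<in> M \<Longrightarrow> h2 x \<in> M" for x using assms(2) Bij_imp_funcset by blast
  have "pmrel a b c \<longleftrightarrow> pmrel (h2 a) (h2 b) (h2 c)" using assms(4) abc unfolding preserves_pm_def by blast
  also have "\<dots> \<longleftrightarrow> pmrel (h1 (h2 a)) (h1 (h2 b)) (h1 (h2 c))" using assms(3) abc m unfolding preserves_pm_def by blast
  finally show "pmrel a b c \<longleftrightarrow> pmrel (compose M h1 h2 a) (compose M h1 h2 b) (compose M h1 h2 c)"
    using abc by (simp add: compose_def)
qed

lemma pres_inv: assumes hB: "h \<in> Bij M" and p: "preserves_pm h"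
  shows "preserves_pm (restrict (inv_into M h) M)"
  unfolding preserves_pm_def
proof (intro ballI)
  fix a b c assume abc: "a \<in> M" "b \<in> M" "c \<in> M"
  have bh: "bij_betw h M M" using hB unfolding Bij_def by blast
  have i: "inv_into M h x \<in> M" "h (inv_into M h x) = x" if "x \<in> M" for x
    using bh that by (auto simp: bij_betw_def inv_into_into f_inv_into_f)
  have "pmrel (inv_into M h a) (inv_into M h b) (inv_into M h c) \<longleftrightarrow>
        pmrel (h (inv_into M h a)) (h (inv_into M h b)) (h (inv_into M h c))"
    using p i abc unfolding preserves_pm_def by blast
  thus "pmrel a b c \<longleftrightarrow> pmrel (restrict (inv_into M h) M a) (restrict (inv_into M h) M b) (restrict (inv_into M h) M c)"
    using i abc by simp
qed

lemma pres_gen: assumes "h \<in> generate (BijGroup M) (GL_M \<union> Spm_M)" shows "h \<in> Bij M \<and> preserves_pm h"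
  using assms
proof (induction rule: generate.induct)
  case one
  have "\<one>\<^bsub>BijGroup M\<^esub> = (\<lambda>x\<in>M. x)" by (simp add: BijGroup_def)
  moreover have "preserves_pm (\<lambda>x\<in>M. x)" unfolding preserves_pm_def by simp
  ultimately show ?case using id_Bij by metis
next
  case (incl h)
  thus ?case using pres_GL pres_Spm unfolding GL_M_def Spm_M_def by blast
next
  case (inv h)
  hence hB: "h \<in> Bij M" and p: "preserves_pm h" using pres_GL pres_Spm unfolding GL_M_def Spm_M_def by blast+
  show ?case unfolding inv_BijGroup[OF hB] using restrict_inv_into_Bij[OF hB] pres_inv[OF hB p] by blast
next
  case (eng h1 h2)
  hence "h1 \<otimes>\<^bsub>BijGroup M\<^esub> h2 = compose M h1 h2" by (simp add: BijGroup_def)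
  thus ?case using compose_Bij[of h1 M h2] pres_comp[of h1 h2] eng.IH by simp
qed

theorem mainTheorem13:
  fixes \<sigma> :: "(nat \<Rightarrow> rat) \<Rightarrow> (nat \<Rightarrow> rat)"
  assumes "bij_betw \<sigma> M M"
  shows "preserves_pm \<sigma> \<longleftrightarrow> restrict \<sigma> M \<in> GLpm_M"
proof
  assume "preserves_pm \<sigma>"
  then interpret pres \<sigma> using assms by unfold_locales
  show "restrict \<sigma> M \<in> GLpm_M" by (rule main_dir)
next
  assume "restrict \<sigma> M \<in> GLpm_M"
  hence "preserves_pm (restrict \<sigma> M)" using pres_gen unfolding GLpm_M_def by blast
  thus "preserves_pm \<sigma>" unfolding preserves_pm_def by simp
qed


end
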